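(* Let $\phi=\tilde p/p$ be an irreducible rational inner function on $\mathbb{D}^3$ of degree $(m,n,1)$ with $p(z)=p_1(z_1,z_2)+z_3p_2(z_1,z_2)$. Then there are at most finitely many $(\zeta_1,\zeta_2)\in\mathbb{T}^2$ such that $\mathcal{Z}_p\cap\mathbb{T}^3$ contains the vertical line $\{(\zeta_1,\zeta_2)\}\times\mathbb{T}$.
   Context: A rational inner function (RIF) on $\mathbb{D}^3$ is a rational function holomorphic on the tridisk with unimodular radial limits a.e. on $\mathbb{T}^3$; it is written $\phi=\tilde p/p$ with $p$ zero-free on $\mathbb{D}^3$, $p,\tilde p$ without common factors, $\tilde p(z)=z_1^mz_2^nz_3\overline{p(1/\bar z_1,1/\bar z_2,1/\bar z_3)}$ for degree $(m,n,1)$. Irreducibility gives that $p_1$ and $p_2$ share no common factors. $\mathcal{Z}_p$ is the zero set of $p$. *)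

theory Defs
  imports "HOL-Analysis.Analysis" "HOL-Computational_Algebra.Polynomial_Factorial"
begin

text \<open>Polynomials in three variables (z1,z2,z3) are represented as
  complex poly poly poly: the outer variable is z3, the middle one z2,
  the innermost one z1.\<close>

type_synonym poly3 = "complex poly poly poly"

definition eval2 :: "complex poly poly \<Rightarrow> complex \<Rightarrow> complex \<Rightarrow> complex" where
  "eval2 q z1 z2 = poly (map_poly (\<lambda>a. poly a z1) q) z2"

definition eval3 :: "poly3 \<Rightarrow> complex \<Rightarrow> complex \<Rightarrow> complex \<Rightarrow> complex" where
  "eval3 P z1 z2 z3 = poly (map_poly (\<lambda>q. eval2 q z1 z2) P) z3"

definition has_multidegree :: "poly3 \<Rightarrow> nat \<Rightarrow> nat \<Rightarrow> nat \<Rightarrow> bool" where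
  "has_multidegree P m n l \<longleftrightarrow>
     degree P = l \<and>
     (\<forall>k. degree (coeff P k) \<le> n) \<and> (\<exists>k. degree (coeff P k) = n) \<and>
     (\<forall>k j. degree (coeff (coeff P k) j) \<le> m) \<and> (\<exists>k j. degree (coeff (coeff P k) j) = m)"

text \<open>Reflection: refl3 m n l P (z) = z1^m z2^n z3^l conj(P(1/conj z1, 1/conj z2, 1/conj z3)).\<close>
definition refl3 :: "nat \<Rightarrow> nat \<Rightarrow> nat \<Rightarrow> poly3 \<Rightarrow> poly3" where
  "refl3 m n l P = (\<Sum>k\<le>l. monom (\<Sum>j\<le>n. monom (\<Sum>i\<le>m.
      monom (cnj (coeff (coeff (coeff P (l - k)) (n - j)) (m - i))) i) j) k)"

end

theory Submission imports Defs "HOL-Computational_Algebra.Field_as_Ring" begin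

instantiation fract :: (idom)
  "{unique_euclidean_ring, normalization_euclidean_semiring, normalization_semidom_multiplicative}"
begin
definition [simp]: "normalize_fract = (normalize_field :: 'a fract \<Rightarrow> _)"
definition [simp]: "unit_factor_fract = (unit_factor_field :: 'a fract \<Rightarrow> _)"
definition [simp]: "modulo_fract = (mod_field :: 'a fract \<Rightarrow> _)"
definition [simp]: "euclidean_size_fract = (euclidean_size_field :: 'a fract \<Rightarrow> _)"
definition [simp]: "division_segment (x :: 'a fract) = 1"
instance
  by standard
    (simp_all add: dvd_field_iff field_split_simps split: if_splits)
end

instantiation fract :: (idom) euclidean_ring_gcd
begin
definition gcd_fract :: "'a fract \<Rightarrow> 'a fract \<Rightarrow> 'a fract" where
  "gcd_fract = Euclidean_Algorithm.gcd"
definition lcm_fract :: "'a fract \<Rightarrow> 'a fract \<Rightarrow> 'a fract" where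
  "lcm_fract = Euclidean_Algorithm.lcm"
definition Gcd_fract :: "'a fract set \<Rightarrow> 'a fract" where
 "Gcd_fract = Euclidean_Algorithm.Gcd"
definition Lcm_fract :: "'a fract set \<Rightarrow> 'a fract" where
 "Lcm_fract = Euclidean_Algorithm.Lcm"
instance by standard (simp_all add: gcd_fract_def lcm_fract_def Gcd_fract_def Lcm_fract_def)
end

instance fract :: (idom) field_gcd ..

lemma eval2_alt: "eval2 q x y = poly (poly q [:y:]) x"
  unfolding eval2_def
  by (induction q) (simp_all add: map_poly_pCons)

lemma eval2_mult: "eval2 (a * b) x y = eval2 a x y * eval2 b x y"
  by (simp add: eval2_alt)
lemma eval2_add: "eval2 (a + b) x y = eval2 a x y + eval2 b x y"
  by (simp add: eval2_alt)
lemma eval2_const: "eval2 [:c:] x y = poly c x"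
  by (simp add: eval2_alt)

lemma deg1_form: fixes P :: "'a::zero poly" assumes "degree P \<le> 1"
  shows "P = [:coeff P 0, coeff P 1:]"
proof (rule poly_eqI)
  fix n show "coeff P n = coeff [:coeff P 0, coeff P 1:] n"
  proof (cases n)
    case (Suc k) then show ?thesis using assms by (cases k) (auto simp: coeff_eq_0)
  qed simp
qed

lemma eval3_pair: "eval3 [:a, b:] x y z = eval2 a x y + z * eval2 b x y"
  unfolding eval3_def by (simp add: map_poly_pCons eval2_def)

lemma eval3_deg1: assumes "degree P \<le> 1"
  shows "eval3 P x y z = eval2 (coeff P 0) x y + z * eval2 (coeff P 1) x y"
  using eval3_pair[of "coeff P 0" "coeff P 1" x y z] deg1_form[OF assms] by metis

lemma is_unit_poly_deg0: "is_unit (p :: complex poly) \<Longrightarrow> degree p = 0"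
  by (metis is_unit_polyE degree_pCons_0)

lemma main_finite:
  fixes p1 p2 :: "complex poly poly"
  assumes cop: "coprime p1 p2" and p2nz: "p2 \<noteq> 0"
  shows "finite {(x, y). eval2 p1 x y = 0 \<and> eval2 p2 x y = 0}"
proof -
  have fcop: "coprime (fract_poly p1) (fract_poly p2)"
  proof (rule coprimeI)
    fix d assume d1: "d dvd fract_poly p1" and d2: "d dvd fract_poly p2"
    have "d \<noteq> 0" using d2 p2nz by auto
    obtain c d' where dd: "d = smult c (fract_poly d')" and cd: "content d' = 1"
      by (rule content_decompose_fract)
    have "c \<noteq> 0" using dd \<open>d \<noteq> 0\<close> by auto
    have dd': "d = [:c:] * fract_poly d'" using dd by simp
    hence fd: "fract_poly d' dvd d" by (metis dvd_triv_right)
    have "d' dvd p1" by (rule fract_poly_dvdD[OF dvd_trans[OF fd d1] cd])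
    moreover have "d' dvd p2" by (rule fract_poly_dvdD[OF dvd_trans[OF fd d2] cd])
    ultimately
    have "is_unit d'" using cop coprime_common_divisor by blast
    hence u: "is_unit (fract_poly d')" by (rule fract_poly_is_unit)
    have "is_unit [:c:]" using \<open>c \<noteq> 0\<close> by (simp add: is_unit_const_poly_iff dvd_field_iff)
    then show "is_unit d" using u unfolding dd' by (rule unit_prod)
  qed
  obtain u v where uv: "u * fract_poly p1 + v * fract_poly p2 = 1"
    using bezout_coefficients_fst_snd[of "fract_poly p1" "fract_poly p2"] fcop
    by (metis coprime_imp_gcd_eq_1)
  obtain cu u' where uu: "u = smult cu (fract_poly u')" by (rule content_decompose_fract)
  obtain cv v' where vv: "v = smult cv (fract_poly v')" by (rule content_decompose_fract)
  obtain a1 b1 where cu: "cu = Fract a1 b1" "b1 \<noteq> 0" by (rule Fract_cases)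
  obtain a2 b2 where cv: "cv = Fract a2 b2" "b2 \<noteq> 0" by (rule Fract_cases)
  define r where "r = b1 * b2"
  have rnz: "r \<noteq> 0" using cu cv by (simp add: r_def)
  have "fract_poly (smult (a1 * b2) u' * p1 + smult (a2 * b1) v' * p2) = fract_poly [:r:]"
  proof -
    have "fract_poly (smult (a1 * b2) u' * p1 + smult (a2 * b1) v' * p2)
       = smult (to_fract r) (u * fract_poly p1 + v * fract_poly p2)"
    proof -
      have tb1: "to_fract b1 \<noteq> 0" "to_fract b2 \<noteq> 0" using cu(2) cv(2) by auto
      have h1: "to_fract (b1*b2) * Fract a1 b1 = to_fract (a1*b2)"
        using tb1 by (simp add: Fract_conv_to_fract field_simps)
      have h2: "to_fract (b1*b2) * Fract a2 b2 = to_fract (a2*b1)"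
        using tb1 by (simp add: Fract_conv_to_fract field_simps)
      show ?thesis unfolding uu vv r_def cu(1) cv(1)
        by (simp add: smult_add_right smult_smult h1 h2 mult_smult_left del: to_fract_mult)
    qed
    also have "\<dots> = fract_poly [:r:]" using uv by (simp add: map_poly_pCons)
    finally show ?thesis .
  qed
  hence bez: "smult (a1 * b2) u' * p1 + smult (a2 * b1) v' * p2 = [:r:]"
    by (simp only: fract_poly_eq_iff)
  define S where "S = {x. poly r x = 0}"
  have finS: "finite S" unfolding S_def using rnz by (rule poly_roots_finite)
  define T where "T = (\<lambda>x. {y. eval2 p1 x y = 0 \<and> eval2 p2 x y = 0})"
  have finT: "finite (T x)" for x
  proof -
    let ?Q1 = "map_poly (\<lambda>a. poly a x) p1" and ?Q2 = "map_poly (\<lambda>a. poly a x) p2"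
    have "?Q1 \<noteq> 0 \<or> ?Q2 \<noteq> 0"
    proof (rule ccontr)
      assume "\<not> ?thesis"
      hence z: "?Q1 = 0" "?Q2 = 0" by auto
      have dv: "[:[:-x,1:]:] dvd q" if "map_poly (\<lambda>a. poly a x) q = 0" for q :: "complex poly poly"
      proof -
        have "poly (coeff q i) x = 0" for i
          using arg_cong[OF that, of "\<lambda>p. coeff p i"] by (simp add: coeff_map_poly)
        hence "[:-x,1:] dvd coeff q i" for i by (simp add: poly_eq_0_iff_dvd)
        hence "[:-x,1:] dvd content q"
          unfolding content_def dvd_gcd_list_iff by (auto simp: coeffs_def)
        thus ?thesis by (simp add: const_poly_dvd_iff_dvd_content)
      qed
      have "is_unit [:[:-x,1:]:]" using dv[OF z(1)] dv[OF z(2)] cop coprime_common_divisor by blast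
      hence "is_unit [:-x,1::complex:]" by (simp add: is_unit_const_poly_iff dvd_field_iff)
      hence "degree [:-x,1::complex:] = 0" by (rule is_unit_poly_deg0)
      thus False by simp
    qed
    moreover have "T x \<subseteq> {y. poly ?Q1 y = 0}" "T x \<subseteq> {y. poly ?Q2 y = 0}"
      unfolding T_def eval2_def by auto
    ultimately show ?thesis using poly_roots_finite[of "?Q1"] poly_roots_finite[of "?Q2"]
      by (meson finite_subset)
  qed
  have key: "x \<in> S \<and> y \<in> T x" if h: "eval2 p1 x y = 0" "eval2 p2 x y = 0" for x y
  proof -
    have "poly r x = eval2 [:r:] x y" by (simp add: eval2_const)
    also have "\<dots> = 0" unfolding bez[symmetric] using h by (simp add: eval2_alt)
    finally show ?thesis using h by (simp add: S_def T_def)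
  qed
  have "{(x, y). eval2 p1 x y = 0 \<and> eval2 p2 x y = 0} \<subseteq> Sigma S T"
    using key by auto
  thus ?thesis using finS finT by (meson finite_SigmaI finite_subset)
qed


theorem lemma3p4:
  fixes P :: poly3 and m n :: nat
  assumes deg: "has_multidegree P m n 1"
    and zero_free: "\<And>z1 z2 z3. norm z1 < 1 \<Longrightarrow> norm z2 < 1 \<Longrightarrow> norm z3 < 1 \<Longrightarrow>
                      eval3 P z1 z2 z3 \<noteq> 0"
    and no_common: "coprime P (refl3 m n 1 P)"
    and irred: "irreducible P"
  shows "finite {(\<zeta>1, \<zeta>2). norm \<zeta>1 = 1 \<and> norm \<zeta>2 = 1 \<and>
                   (\<forall>\<zeta>3. norm \<zeta>3 = 1 \<longrightarrow> eval3 P \<zeta>1 \<zeta>2 \<zeta>3 = 0)}"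
proof -
  have dP: "degree P = 1" using deg by (simp add: has_multidegree_def)
  define p1 where "p1 = coeff P 0"
  define p2 where "p2 = coeff P 1"
  have Pform: "P = [:p1, p2:]" unfolding p1_def p2_def using deg1_form[of P] dP by simp
  have p2nz: "p2 \<noteq> 0" using dP Pform by auto
  have cop: "coprime p1 p2"
  proof (rule coprimeI)
    fix c assume c1: "c dvd p1" and c2: "c dvd p2"
    then obtain a b where a: "p1 = c * a" and b: "p2 = c * b" by (auto elim!: dvdE)
    have "P = [:c:] * [:a, b:]" unfolding Pform a b by simp
    from irreducibleD[OF irred this] have "is_unit [:c:] \<or> is_unit [:a, b:]" .
    moreover have "\<not> is_unit [:a, b:]"
    proof
      assume "is_unit [:a, b:]"
      hence "degree [:a, b:] = 0" by (metis is_unit_polyE degree_pCons_0)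
      hence "b = 0" by (cases "b = 0") auto
      thus False using b p2nz by simp
    qed
    ultimately show "is_unit c" by (simp add: is_unit_const_poly_iff)
  qed
  have "{(\<zeta>1, \<zeta>2). norm \<zeta>1 = 1 \<and> norm \<zeta>2 = 1 \<and>
                   (\<forall>\<zeta>3. norm \<zeta>3 = 1 \<longrightarrow> eval3 P \<zeta>1 \<zeta>2 \<zeta>3 = 0)}
        \<subseteq> {(x, y). eval2 p1 x y = 0 \<and> eval2 p2 x y = 0}"
  proof (clarify)
    fix x y :: complex
    assume "\<forall>\<zeta>3. norm \<zeta>3 = 1 \<longrightarrow> eval3 P x y \<zeta>3 = 0"
    hence e1: "eval3 P x y 1 = 0" and e2: "eval3 P x y (-1) = 0" by auto
    have s1: "eval2 p1 x y + eval2 p2 x y = 0" using e1 unfolding Pform eval3_pair by simp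
    have s2: "eval2 p1 x y - eval2 p2 x y = 0" using e2 unfolding Pform eval3_pair by simp
    hence eq: "eval2 p1 x y = eval2 p2 x y" by simp
    hence "2 * eval2 p2 x y = 0" using s1 by simp
    hence "eval2 p2 x y = 0" by simp
    thus "eval2 p1 x y = 0 \<and> eval2 p2 x y = 0" using eq by simp
  qed
  thus ?thesis using main_finite[OF cop p2nz] finite_subset by blast
qed

end
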